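(* For every $n\ge 0$, the number of self-describing sequences in $\mathcal{A}_n$ (equivalently, the number of members of the Catalan family $\mathcal{C}$ of length $n+1$) equals the Catalan number $c_{n+1}$. Moreover, for each $r=0,\dots,n$, the number of self-describing sequences $(a_0,\dots,a_n)\in\mathcal{A}_n$ with last term $a_n=r$ equals $c_r c_{n-r}$.
   Context: $\mathcal{A}_n$ is the set of integer sequences $a=(a_0,\dots,a_n)$ with $0\le a_i\le i$ for all $i$. A sequence is self-describing if $\#\{j: j<i,\ a_j<a_i\}=a_i$ for every index $i$. The Catalan numbers are $c_m=\frac{1}{m+1}\binom{2m}{m}$. The Catalan family $\mathcal{C}$ is defined recursively together with, for each member $a$, a "sibling list" $L(a)$: $(0)\in\mathcal{C}$ with $L((0))=(0)$. If $a=(a_0,\dots,a_n)\in\mathcal{C}$ with $L(a)=(s_0,s_1,\dots,s_m)$ and $a_n=s_i$, then the children of $a$ are $(a_0,\dots,a_n,t)$ for $t\in\{s_0,\dots,s_i,n+1\}$, all in $\mathcal{C}$, each with sibling list $(s_0,\dots,s_i,n+1)$; $\mathcal{C}$ consists exactly of the sequences obtained this way. (Its members are exactly the self-describing sequences.) *)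

theory Defs
  imports Main
begin

definition A_seqs :: "nat \<Rightarrow> nat list set" where
  "A_seqs n = {a. length a = n + 1 \<and> (\<forall>i < length a. a ! i \<le> i)}"

definition self_describing :: "nat list \<Rightarrow> bool" where
  "self_describing a \<longleftrightarrow>
     (\<forall>i < length a. card {j. j < i \<and> a ! j < a ! i} = a ! i)"

definition catalan :: "nat \<Rightarrow> nat" where
  "catalan m = ((2 * m) choose m) div (m + 1)"

end

theory Submission
  imports Defs "HOL-Computational_Algebra.Formal_Power_Series"
begin


definition SD :: "nat \<Rightarrow> nat list set" where
  "SD m = {a. length a = m \<and> self_describing a}"

lemma sd_le: assumes "self_describing a" "i < length a" shows "a ! i \<le> i"
proof -
  have "a ! i = card {j. j < i \<and> a ! j < a ! i}" using assms unfolding self_describing_def by simp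
  also have "\<dots> \<le> card {..<i}" by (intro card_mono) auto
  finally show ?thesis by simp
qed

lemma A_sd: "{a \<in> A_seqs n. self_describing a} = SD (n+1)"
  unfolding A_seqs_def SD_def using sd_le by auto

lemma SD_finite: "finite (SD m)"
proof -
  have "SD m \<subseteq> {a. set a \<subseteq> {..<m} \<and> length a = m}"
  proof
    fix a assume "a \<in> SD m"
    hence "length a = m" "self_describing a" unfolding SD_def by auto
    moreover have "set a \<subseteq> {..<m}"
    proof
      fix x assume "x \<in> set a"
      then obtain i where "i < length a" "x = a ! i" by (auto simp: in_set_conv_nth)
      thus "x \<in> {..<m}" using sd_le[OF \<open>self_describing a\<close>] \<open>length a = m\<close> by fastforce
    qed
    ultimately show "a \<in> {a. set a \<subseteq> {..<m} \<and> length a = m}" by simp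
  qed
  thus ?thesis by (rule finite_subset) (rule finite_lists_length_eq, simp)
qed

lemma SD_0: "SD 0 = {[]}"
  unfolding SD_def self_describing_def by auto

lemma set1:
  assumes "length s = r" "i < r"
  shows "{j. j < i \<and> (s @ u) ! j < (s @ u) ! i} = {j. j < i \<and> s ! j < s ! i}"
  using assms by (auto simp: nth_append)

lemma set2:
  assumes "length s = r" "\<forall>x\<in>set s. x < r" "k < length t"
  shows "{j. j < r + k \<and> (s @ map (\<lambda>x. x + r) t @ w) ! j < (s @ map (\<lambda>x. x + r) t @ w) ! (r + k)}
       = {..<r} \<union> (\<lambda>k'. r + k') ` {k'. k' < k \<and> t ! k' < t ! k}" (is "?L = ?R")
proof
  show "?L \<subseteq> ?R"
  proof
    fix j assume j: "j \<in> ?L"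
    show "j \<in> ?R"
    proof (cases "j < r")
      case True thus ?thesis by simp
    next
      case False
      then obtain k' where "j = r + k'" by (metis le_add_diff_inverse not_less)
      thus ?thesis using j assms by (auto simp: nth_append)
    qed
  qed
next
  show "?R \<subseteq> ?L"
  proof
    fix j assume j: "j \<in> ?R"
    show "j \<in> ?L"
    proof (cases "j < r")
      case True
      hence "s ! j < r" using assms by auto
      hence "s ! j < t ! k + r" by simp
      thus ?thesis using True assms by (auto simp: nth_append)
    next
      case False thus ?thesis using j assms by (auto simp: nth_append)
    qed
  qed
qed

lemma card2:
  assumes "length s = r" "\<forall>x\<in>set s. x < r" "k < length t"
  shows "card {j. j < r + k \<and> (s @ map (\<lambda>x. x + r) t @ w) ! j < (s @ map (\<lambda>x. x + r) t @ w) ! (r + k)}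
       = r + card {k'. k' < k \<and> t ! k' < t ! k}"
proof -
  have "card ({..<r} \<union> (\<lambda>k'. r + k') ` {k'. k' < k \<and> t ! k' < t ! k}) = card {..<r} + card ((\<lambda>k'. r + k') ` {k'. k' < k \<and> t ! k' < t ! k})"
    by (intro card_Un_disjoint) auto
  also have "card ((\<lambda>k'. r + k') ` {k'. k' < k \<and> t ! k' < t ! k}) = card {k'. k' < k \<and> t ! k' < t ! k}"
    by (intro card_image) (auto simp: inj_on_def)
  finally show ?thesis using set2[OF assms, of w] by simp
qed

lemma set3:
  assumes "length s = r" "\<forall>x\<in>set s. x < r"
  shows "{j. j < r + length t \<and> (s @ map (\<lambda>x. x + r) t @ [r]) ! j < (s @ map (\<lambda>x. x + r) t @ [r]) ! (r + length t)} = {..<r}"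
  using assms by (auto simp: nth_append)

lemma sd_concat:
  assumes "length s = r" "\<forall>x\<in>set s. x < r"
  shows "self_describing (s @ map (\<lambda>x. x + r) t @ [r]) \<longleftrightarrow> self_describing s \<and> self_describing t"
    (is "self_describing ?a \<longleftrightarrow> _")
proof -
  let ?P = "\<lambda>i. card {j. j < i \<and> ?a ! j < ?a ! i} = ?a ! i"
  have len: "length ?a = r + length t + 1" using assms by simp
  have "self_describing ?a \<longleftrightarrow> (\<forall>i<r. ?P i) \<and> (\<forall>k<length t. ?P (r + k)) \<and> ?P (r + length t)"
    unfolding self_describing_def len
  proof (intro iffI conjI)
    assume H: "\<forall>i<r + length t + 1. ?P i"
    show "\<forall>i<r. ?P i" using H by auto
    show "\<forall>k<length t. ?P (r + k)" using H by auto
    show "?P (r + length t)" using H by auto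
  next
    assume H: "(\<forall>i<r. ?P i) \<and> (\<forall>k<length t. ?P (r + k)) \<and> ?P (r + length t)"
    show "\<forall>i<r + length t + 1. ?P i"
    proof (intro allI impI)
      fix i assume i: "i < r + length t + 1"
      show "?P i"
      proof (cases "i < r")
        case True thus ?thesis using H by auto
      next
        case False
        then obtain k where k: "i = r + k" by (metis le_add_diff_inverse not_less)
        show ?thesis
        proof (cases "k < length t")
          case True thus ?thesis using H k by auto
        next
          case False hence "k = length t" using i k by simp
          thus ?thesis using H k by simp
        qed
      qed
    qed
  qed
  moreover have "(\<forall>i<r. ?P i) \<longleftrightarrow> self_describing s"
    unfolding self_describing_def using assms set1[OF assms(1)] by (auto simp: nth_append)
  moreover have "(\<forall>k<length t. ?P (r + k)) \<longleftrightarrow> self_describing t"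
    unfolding self_describing_def using card2[OF assms, of _ t "[r]"] assms by (auto simp: nth_append)
  moreover have "?P (r + length t)"
    using set3[OF assms, of t] assms by (simp add: nth_append)
  ultimately show ?thesis by blast
qed


definition comb :: "nat \<Rightarrow> nat list \<times> nat list \<Rightarrow> nat list" where
  "comb r p = fst p @ map (\<lambda>x. x + r) (snd p) @ [r]"

lemma SD_vals: assumes "s \<in> SD r" shows "\<forall>x\<in>set s. x < r"
proof
  fix x assume "x \<in> set s"
  then obtain i where i: "i < length s" "x = s ! i" by (auto simp: in_set_conv_nth)
  have "length s = r" "self_describing s" using assms unfolding SD_def by auto
  thus "x < r" using sd_le[of s i] i by simp
qed

lemma fiber_eq:
  assumes "r \<le> n"
  shows "{a \<in> SD (n+1). a ! n = r} = comb r ` (SD r \<times> SD (n - r))"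
proof
  show "comb r ` (SD r \<times> SD (n - r)) \<subseteq> {a \<in> SD (n+1). a ! n = r}"
  proof
    fix a assume "a \<in> comb r ` (SD r \<times> SD (n - r))"
    then obtain s t where st: "s \<in> SD r" "t \<in> SD (n-r)" and a: "a = s @ map (\<lambda>x. x + r) t @ [r]"
      unfolding comb_def by auto
    have ls: "length s = r" and lt: "length t = n - r" using st unfolding SD_def by auto
    have "self_describing a" unfolding a using sd_concat[OF ls SD_vals[OF st(1)]] st unfolding SD_def by auto
    moreover have "length a = n + 1" using ls lt assms a by simp
    moreover have "a ! n = r" using ls lt assms a by (simp add: nth_append)
    ultimately show "a \<in> {a \<in> SD (n+1). a ! n = r}" unfolding SD_def by simp
  qed
next
  show "{a \<in> SD (n+1). a ! n = r} \<subseteq> comb r ` (SD r \<times> SD (n - r))"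
  proof
    fix a assume "a \<in> {a \<in> SD (n+1). a ! n = r}"
    hence la: "length a = n + 1" and sda: "self_describing a" and an: "a ! n = r" unfolding SD_def by auto
    have big: "r \<le> a ! j" if j: "r \<le> j" "j < n" for j
    proof (rule ccontr)
      assume "\<not> r \<le> a ! j"
      moreover have "\<forall>x<r. a ! x < r"
      proof (intro allI impI)
        fix x assume "x < r"
        moreover hence "a ! x \<le> x" using sd_le[OF sda, of x] la j by simp
        ultimately show "a ! x < r" by simp
      qed
      ultimately have "insert j {..<r} \<subseteq> {j'. j' < n \<and> a ! j' < a ! n}"
        using j an sda la sd_le[OF sda] by (auto intro: le_less_trans)
      hence "card (insert j {..<r}) \<le> card {j'. j' < n \<and> a ! j' < a ! n}"
        by (intro card_mono) auto
      moreover have "card {j'. j' < n \<and> a ! j' < a ! n} = r"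
        using sda la an unfolding self_describing_def by auto
      moreover have "card (insert j {..<r}) = r + 1" using j by simp
      ultimately show False by simp
    qed
    define s where "s = take r a"
    define t where "t = map (\<lambda>x. x - r) (take (n - r) (drop r a))"
    have ls: "length s = r" using la assms unfolding s_def by simp
    have lt: "length t = n - r" using la assms unfolding t_def by simp
    have svals: "\<forall>x\<in>set s. x < r"
    proof
      fix x assume "x \<in> set s"
      then obtain i where "i < r" "x = a ! i" using ls unfolding s_def by (auto simp: in_set_conv_nth)
      thus "x < r" using sd_le[OF sda, of i] la assms by simp
    qed
    have aeq: "a = s @ map (\<lambda>x. x + r) t @ [r]"
    proof (rule nth_equalityI)
      show "length a = length (s @ map (\<lambda>x. x + r) t @ [r])" using la ls lt assms by simp
      fix i assume "i < length a"
      hence i: "i < n + 1" using la by simp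
      show "a ! i = (s @ map (\<lambda>x. x + r) t @ [r]) ! i"
      proof (cases "i < r")
        case True thus ?thesis using ls unfolding s_def by (simp add: nth_append)
      next
        case False
        show ?thesis
        proof (cases "i < n")
          case True
          have "r \<le> a ! i" using big False True by simp
          moreover have "t ! (i - r) = a ! i - r" unfolding t_def using True False la assms by simp
          moreover have "i - r < n - r" using False True by arith
          ultimately show ?thesis using ls lt False True assms by (simp add: nth_append)
        next
          case False2: False
          hence "i = n" using i by simp
          thus ?thesis using ls lt an assms by (simp add: nth_append)
        qed
      qed
    qed
    have "self_describing s \<and> self_describing t"
      using sd_concat[OF ls svals, of t] sda aeq by simp
    hence "(s, t) \<in> SD r \<times> SD (n - r)" using ls lt unfolding SD_def by simp
    moreover have "a = comb r (s, t)" using aeq unfolding comb_def by simp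
    ultimately show "a \<in> comb r ` (SD r \<times> SD (n - r))" by blast
  qed
qed

lemma comb_inj: "inj_on (comb r) (SD r \<times> SD m)"
proof (rule inj_onI)
  fix p q assume p: "p \<in> SD r \<times> SD m" and q: "q \<in> SD r \<times> SD m" and e: "comb r p = comb r q"
  have "length (fst p) = length (fst q)" using p q unfolding SD_def by auto
  hence "fst p = fst q \<and> map (\<lambda>x. x + r) (snd p) @ [r] = map (\<lambda>x. x + r) (snd q) @ [r]"
    using e unfolding comb_def by simp
  moreover have "inj (\<lambda>x::nat. x + r)" by (simp add: inj_on_def)
  ultimately have "fst p = fst q" "snd p = snd q" by (auto dest: inj_map_eq_map)
  thus "p = q" by (simp add: prod_eq_iff)
qed

lemma fiber_card:
  assumes "r \<le> n"
  shows "card {a \<in> SD (n+1). a ! n = r} = card (SD r) * card (SD (n - r))"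
  unfolding fiber_eq[OF assms] by (simp add: card_image[OF comb_inj] card_cartesian_product)

lemma SD_Suc_card: "card (SD (Suc n)) = (\<Sum>r\<le>n. card (SD r) * card (SD (n - r)))"
proof -
  have "SD (Suc n) = (\<Union>r\<in>{..n}. {a \<in> SD (n+1). a ! n = r})"
    using sd_le unfolding SD_def by auto
  hence "card (SD (Suc n)) = (\<Sum>r\<le>n. card {a \<in> SD (n+1). a ! n = r})"
    by (simp only:) (rule card_UN_disjoint, auto intro: finite_subset[OF _ SD_finite])
  also have "\<dots> = (\<Sum>r\<le>n. card (SD r) * card (SD (n - r)))"
    by (intro sum.cong refl) (metis atMost_iff fiber_card)
  finally show ?thesis .
qed



lemma cat_dvd: "Suc m dvd ((2*m) choose m)"
proof -
  have "Suc m * ((2*m) choose Suc m) = m * ((2*m) choose m)"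
    by (metis add_diff_cancel_left' binomial_absorb_comp binomial_absorption mult_2)
  hence "(2*m) choose m = Suc m * (((2*m) choose m) - ((2*m) choose Suc m))"
    by (simp add: algebra_simps diff_mult_distrib2)
  thus ?thesis by (metis dvd_triv_left)
qed

definition Cr :: "nat \<Rightarrow> real" where "Cr m = real ((2*m) choose m) / (m+1)"

lemma cat_real: "real (catalan m) = Cr m"
  unfolding catalan_def Cr_def using cat_dvd[of m]
  by (simp add: real_of_nat_div)

lemma Cr_rec: "(m+2) * Cr (m+1) = (4*m+2) * Cr m"
proof -
  have a: "Suc (Suc (2*m)) * (Suc (2*m) choose m) = (Suc (Suc (2*m)) choose Suc m) * Suc m"
    by (rule Suc_times_binomial_eq)
  have b: "Suc (2*m) * ((2*m) choose m) = (Suc (2*m) choose Suc m) * Suc m"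
    by (rule Suc_times_binomial_eq)
  have c: "Suc (2*m) choose m = Suc (2*m) choose Suc m"
    using binomial_symmetric[of m "Suc (2*m)"] by simp
  define X where "X = real (Suc (Suc (2*m)) choose Suc m)"
  define Y where "Y = real (Suc (2*m) choose Suc m)"
  define Z where "Z = real ((2*m) choose m)"
  have a': "(2*m+2) * Y = X * (m+1)" using arg_cong[OF a, of real] c unfolding X_def Y_def by (simp del: binomial_Suc_Suc add: algebra_simps)
  have b': "(2*m+1) * Z = Y * (m+1)" using arg_cong[OF b, of real] unfolding Z_def Y_def by (simp del: binomial_Suc_Suc add: algebra_simps)
  have "X * (m+1) * (m+1) = ((2*m+2) * Y) * (m+1)" using a' by simp
  also have "\<dots> = (2*m+2) * (Y * (m+1))" by (simp only: mult.assoc)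
  also have "\<dots> = (2*m+2) * ((2*m+1) * Z)" using b' by simp
  also have "\<dots> = (2 * (2*m+1) * Z) * (m+1)" by (simp add: algebra_simps)
  finally have "(X * (m+1)) * (m+1) = (2 * (2*m+1) * Z) * (m+1)" .
  hence XZ: "X * (m+1) = 2 * (2*m+1) * Z" by (subst (asm) mult_right_cancel) auto
  have "Cr (m+1) = X / (m+2)" unfolding Cr_def X_def by (simp add: mult_2)
  hence L: "(m+2) * Cr (m+1) = X" by simp
  have "Cr m = Z / (m+1)" unfolding Cr_def Z_def by simp
  hence "(4*m+2) * Cr m = ((4*m+2) * Z) / (m+1)" by simp
  also have "(4*m+2) * Z = X * (m+1)" using XZ by (simp add: algebra_simps)
  also have "X * (m+1) / (m+1) = X" by simp
  finally show ?thesis using L by (simp add: add.commute)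
qed

definition bb :: "nat \<Rightarrow> real" where "bb k = ((1/2::real) gchoose k) * (-4)^k"

lemma bb_rec: "(k+1) * bb (k+1) = (1/2 - k) * (-4) * bb k"
proof -
  have "(1/2::real) * ((1/2) gchoose k) = of_nat k * ((1/2) gchoose k) + of_nat (Suc k) * ((1/2) gchoose (Suc k))"
    by (rule gbinomial_mult_1)
  hence h2: "of_nat (Suc k) * ((1/2::real) gchoose (Suc k)) = (1/2 - of_nat k) * ((1/2) gchoose k)"
    by (simp add: algebra_simps)
  have "real (k+1) * bb (k+1) = (of_nat (Suc k) * ((1/2::real) gchoose (Suc k))) * (-4)^(Suc k)"
    by (simp add: bb_def)
  also have "\<dots> = ((1/2 - of_nat k) * ((1/2) gchoose k)) * (-4)^(Suc k)" using h2 by simp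
  also have "\<dots> = (1/2 - k) * (-4) * bb k" by (simp add: bb_def algebra_simps)
  finally show ?thesis by (simp only: of_nat_add of_nat_1)
qed

lemma bb_Cr: "bb (m+1) = -2 * Cr m"
proof (induction m)
  case 0 thus ?case by (simp add: bb_def Cr_def)
next
  case (Suc m)
  have "(m+2) * bb (m+2) = (1/2 - (m+1)) * (-4) * bb (m+1)"
    using bb_rec[of "m+1"] by (simp add: add.commute)
  also have "\<dots> = -2 * ((4*m+2) * Cr m)" using Suc.IH by (simp add: algebra_simps)
  also have "\<dots> = -2 * ((m+2) * Cr (m+1))" using Cr_rec[of m] by (simp add: algebra_simps)
  finally have "(m+2) * bb (m+2) = (m+2) * (-2 * Cr (m+1))" by simp
  moreover have nz: "real (m+2) \<noteq> 0" by simp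
  ultimately have "bb (m+2) = -2 * Cr (m+1)" using mult_left_cancel[OF nz] by blast
  thus ?case by simp
qed

lemma Cr_conv: "Cr (m+1) = (\<Sum>j\<le>m. Cr j * Cr (m-j))"
proof -
  have V: "(\<Sum>k\<in>{0..m+2}. ((1/2::real) gchoose k) * ((1/2) gchoose (m+2 - k))) = 0"
  proof -
    have "(\<Sum>k\<in>{0..m+2}. ((1/2::real) gchoose k) * ((1/2) gchoose (m+2 - k))) = (1/2 + 1/2) gchoose (m+2)"
      by (rule gbinomial_Vandermonde)
    also have "\<dots> = 0" using binomial_gbinomial[of 1 "m+2", where 'a=real] by simp
    finally show ?thesis .
  qed
  define f where "f k = bb k * bb (m+2-k)" for k
  have "(\<Sum>k\<le>m+2. f k) = (-4)^(m+2) * (\<Sum>k\<in>{0..m+2}. ((1/2::real) gchoose k) * ((1/2) gchoose (m+2 - k)))"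
    unfolding f_def bb_def atLeast0AtMost sum_distrib_left
    by (intro sum.cong refl) (auto simp: power_add[symmetric])
  hence S0: "(\<Sum>k\<le>m+2. f k) = 0" using V by simp
  have "(\<Sum>k\<le>m+2. f k) = f 0 + (\<Sum>j\<le>m. f (Suc j)) + f (m+2)"
  proof -
    have "(\<Sum>k\<le>Suc (m+1). f k) = f 0 + (\<Sum>j\<le>m+1. f (Suc j))" by (rule sum.atMost_Suc_shift)
    moreover have "(\<Sum>j\<le>m+1. f (Suc j)) = (\<Sum>j\<le>m. f(Suc j)) + f(m+2)" by simp
    ultimately show ?thesis by simp
  qed
  moreover have "f 0 = bb (m+2)" "f (m+2) = bb (m+2)" unfolding f_def by (simp_all add: bb_def)
  moreover have "(\<Sum>j\<le>m. f (Suc j)) = 4 * (\<Sum>j\<le>m. Cr j * Cr (m-j))"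
    unfolding sum_distrib_left f_def
  proof (intro sum.cong refl)
    fix j assume "j \<in> {..m}"
    hence "m+2 - Suc j = (m-j) + 1" by auto
    thus "bb (Suc j) * bb (m + 2 - Suc j) = 4 * (Cr j * Cr (m - j))"
      using bb_Cr[of j] bb_Cr[of "m-j"] by simp
  qed
  moreover have "bb (m+2) = -2 * Cr (m+1)" using bb_Cr[of "m+1"] by simp
  ultimately show ?thesis using S0 by simp
qed

lemma catalan_conv: "catalan (Suc m) = (\<Sum>j\<le>m. catalan j * catalan (m-j))"
proof -
  have "real (catalan (Suc m)) = real (\<Sum>j\<le>m. catalan j * catalan (m-j))"
    using Cr_conv[of m] by (simp add: cat_real)
  thus ?thesis by (simp only: of_nat_eq_iff)
qed


lemma SD_card: "card (SD m) = catalan m"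
proof (induction m rule: less_induct)
  case (less m)
  show ?case
  proof (cases m)
    case 0 thus ?thesis by (simp add: SD_0 catalan_def)
  next
    case (Suc n)
    have "card (SD m) = (\<Sum>r\<le>n. card (SD r) * card (SD (n - r)))" using Suc SD_Suc_card by simp
    also have "\<dots> = (\<Sum>r\<le>n. catalan r * catalan (n - r))"
      by (intro sum.cong refl) (simp add: less.IH Suc le_imp_less_Suc)
    also have "\<dots> = catalan m" using Suc catalan_conv by simp
    finally show ?thesis .
  qed
qed

theorem theorem3:
  fixes n :: nat
  shows "card {a \<in> A_seqs n. self_describing a} = catalan (n + 1) \<and>
         (\<forall>r \<le> n. card {a \<in> A_seqs n. self_describing a \<and> a ! n = r}
                    = catalan r * catalan (n - r))"
proof (intro conjI allI impI)
  show "card {a \<in> A_seqs n. self_describing a} = catalan (n + 1)"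
    by (simp only: A_sd SD_card)
  fix r assume r: "r \<le> n"
  have "{a \<in> A_seqs n. self_describing a \<and> a ! n = r} = {a \<in> SD (n+1). a ! n = r}"
    using A_sd[of n] by blast
  thus "card {a \<in> A_seqs n. self_describing a \<and> a ! n = r} = catalan r * catalan (n - r)"
    using fiber_card[OF r] by (simp add: SD_card)
qed

end
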